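(* Let $R$ be a ring with identity and $a\in R$. Then $a$ is quasipolar if and only if $a=s+q$ where $s$ is strongly regular, $s\in\mathrm{comm}^2(a)$, $q\in R^{qnil}$, and $sq=qs=0$.
   Context: For $a\in R$, $\mathrm{comm}(a)=\{x\in R\mid xa=ax\}$, $\mathrm{comm}^2(a)=\{x\in R\mid xy=yx\text{ for all }y\in\mathrm{comm}(a)\}$. $U(R)$ is the unit group and $R^{qnil}=\{a\in R\mid 1+ax\in U(R)\text{ for every }x\in\mathrm{comm}(a)\}$. An element $a\in R$ is quasipolar if there is an idempotent $p\in\mathrm{comm}^2(a)$ with $a+p\in U(R)$ and $ap\in R^{qnil}$. An element $s$ is strongly regular if $s=sbs$ for some $b\in R$ with $bs=sb$. *)

theory Defs
  imports Main
begin

definition unit_el :: "'a::ring_1 \<Rightarrow> bool" where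
  "unit_el u \<longleftrightarrow> (\<exists>v. u * v = 1 \<and> v * u = 1)"

definition comm :: "'a::ring_1 \<Rightarrow> 'a set" where
  "comm a = {x. x * a = a * x}"

definition comm2 :: "'a::ring_1 \<Rightarrow> 'a set" where
  "comm2 a = {x. \<forall>y \<in> comm a. x * y = y * x}"

definition qnil :: "'a::ring_1 set" where
  "qnil = {a. \<forall>x \<in> comm a. unit_el (1 + a * x)}"

definition quasipolar :: "'a::ring_1 \<Rightarrow> bool" where
  "quasipolar a \<longleftrightarrow> (\<exists>p. p * p = p \<and> p \<in> comm2 a \<and> unit_el (a + p) \<and> a * p \<in> qnil)"

definition strongly_regular :: "'a::ring_1 \<Rightarrow> bool" where
  "strongly_regular s \<longleftrightarrow> (\<exists>b. s = s * b * s \<and> b * s = s * b)"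

end

theory Submission imports Defs begin

lemma unit_mult: "unit_el (u::'a::ring_1) \<Longrightarrow> unit_el w \<Longrightarrow> unit_el (u*w)"
proof -
  assume "unit_el u" "unit_el w"
  then obtain u' w' where "u*u'=1" "u'*u=1" "w*w'=1" "w'*w=1" unfolding unit_el_def by blast
  then have "(u*w)*(w'*u') = 1" "(w'*u')*(u*w) = 1"
    by (simp_all add: mult.assoc) (metis mult.assoc mult_1_left)+
  then show ?thesis unfolding unit_el_def by blast
qed

lemma fwd:
  fixes a p v :: "'a::ring_1"
  assumes pp: "p*p = p" and pc: "p \<in> comm2 a" and v1: "(a+p)*v = 1" and v2: "v*(a+p) = 1"
    and aq: "a*p \<in> qnil"
  shows "\<exists>s q. a = s + q \<and> strongly_regular s \<and> s \<in> comm2 a \<and> q \<in> qnil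
       \<and> s * q = 0 \<and> q * s = 0"
proof -
  have pa: "p*a = a*p" using pc unfolding comm2_def comm_def by auto
  have pu: "p*(a+p) = (a+p)*p" using pa by (simp add: algebra_simps)
  have pv: "v*p = p*v"
  proof -
    have "v*p = v*p*((a+p)*v)" using v1 by simp
    also have "\<dots> = v*(p*(a+p))*v" by (simp add: mult.assoc)
    also have "\<dots> = v*((a+p)*p)*v" using pu by simp
    also have "\<dots> = (v*(a+p))*p*v" by (simp add: mult.assoc)
    finally show ?thesis using v2 by simp
  qed
  define s where "s = a - a*p"
  define q where "q = a*p"
  have sq: "s*q = 0"
  proof -
    have "s*q = a*(a*p) - a*(p*a)*p" unfolding s_def q_def by (simp add: algebra_simps)
    also have "\<dots> = 0" using pa pp by (simp add: mult.assoc)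
    finally show ?thesis .
  qed
  have qs: "q*s = 0"
  proof -
    have "q*s = a*(p*a) - a*(p*a)*p" unfolding s_def q_def by (simp add: algebra_simps)
    also have "\<dots> = 0" using pa pp by (simp add: mult.assoc)
    finally show ?thesis .
  qed
  have su: "s = (a+p)*(1-p)" unfolding s_def using pp by (simp add: algebra_simps)
  define b where "b = v*(1-p)"
  have v1p: "v*(1-p) = (1-p)*v" using pv by (simp add: algebra_simps)
  have p1p: "(1-p)*(1-p) = 1-p" using pp by (simp add: algebra_simps)
  have u1p: "(a+p)*(1-p) = (1-p)*(a+p)" using pu by (simp add: algebra_simps)
  have sb: "s*b = 1-p"
  proof -
    have "s*b = (a+p)*((1-p)*v)*(1-p)" unfolding su b_def by (simp add: mult.assoc)
    also have "\<dots> = (a+p)*(v*(1-p))*(1-p)" using v1p by simp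
    also have "\<dots> = ((a+p)*v)*((1-p)*(1-p))" by (simp add: mult.assoc)
    finally show ?thesis using v1 p1p by simp
  qed
  have bs: "b*s = 1-p"
  proof -
    have "b*s = v*((1-p)*(a+p))*(1-p)" unfolding su b_def by (simp add: mult.assoc)
    also have "\<dots> = v*((a+p)*(1-p))*(1-p)" using u1p by simp
    also have "\<dots> = (v*(a+p))*((1-p)*(1-p))" by (simp add: mult.assoc)
    finally show ?thesis using v2 p1p by simp
  qed
  have sbs: "s*b*s = s"
  proof -
    have "s*b*s = (1-p)*(a-a*p)" using sb s_def by simp
    also have "\<dots> = a - a*p - (p*a) + (p*a)*p" by (simp add: algebra_simps)
    also have "\<dots> = s" using pa pp s_def by (simp add: mult.assoc)
    finally show ?thesis .
  qed
  have sr: "strongly_regular s" unfolding strongly_regular_def using sbs sb bs by metis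
  have sc: "s \<in> comm2 a"
    unfolding comm2_def
  proof (intro CollectI ballI)
    fix y assume y: "y \<in> comm a"
    then have ya: "y*a = a*y" unfolding comm_def by auto
    have py: "p*y = y*p" using pc y unfolding comm2_def by auto
    have "s*y = a*y - a*(p*y)" unfolding s_def by (simp add: algebra_simps)
    also have "\<dots> = y*a - (a*y)*p" using py ya by (simp add: mult.assoc)
    also have "\<dots> = y*s" unfolding s_def using ya
      by (simp add: algebra_simps) (metis mult.assoc)
    finally show "s*y = y*s" .
  qed
  show ?thesis
    apply (rule exI[of _ s], rule exI[of _ q])
    using sr sc sq qs aq by (simp add: s_def q_def)
qed

lemma bwd:
  fixes a s q b :: "'a::ring_1"
  assumes sbs: "s = s*b*s" and bs: "b*s = s*b" and sc: "s \<in> comm2 a" and qq: "q \<in> qnil"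
    and sq: "s*q = 0" and qs: "q*s = 0" and as: "a = s + q"
  shows "quasipolar a"
proof -
  define e where "e = s*b"
  have se: "s*e = s" using sbs bs e_def by (metis mult.assoc)
  have es: "e*s = s" using sbs e_def by simp
  have ee: "e*e = e" unfolding e_def by (metis mult.assoc sbs)
  have s1e: "s*(1-e) = 0" using se by (simp add: algebra_simps)
  have s1e': "(1-e)*s = 0" using es by (simp add: algebra_simps)
  define p where "p = 1 - e"
  have pp: "p*p = p" unfolding p_def using ee by (simp add: algebra_simps)
  have pc: "p \<in> comm2 a"
    unfolding comm2_def
  proof (intro CollectI ballI)
    fix y assume y: "y \<in> comm a"
    have sy: "s*y = y*s" using sc y unfolding comm2_def by auto
    have "e*y*(1-e) = (b*s)*y*(1-e)" using bs e_def by simp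
    also have "\<dots> = b*(s*y)*(1-e)" by (simp add: mult.assoc)
    also have "\<dots> = b*(y*s)*(1-e)" using sy by simp
    also have "\<dots> = b*y*(s*(1-e))" by (simp add: mult.assoc)
    finally have "e*y*(1-e) = b*y*(s*(1-e))" .
    then have h1: "e*y*(1-e) = 0" using s1e by simp
    have "(1-e)*y*e = ((1-e)*s)*y*b" unfolding e_def using sy by (simp add: mult.assoc)
    then have h2: "(1-e)*y*e = 0" using s1e' by simp
    have "e*y = e*y*e"
    proof -
      have "e*y*(1-e) = e*y - e*y*e" by (simp add: algebra_simps)
      then show ?thesis using h1 by simp
    qed
    also have "\<dots> = y*e"
    proof -
      have "(1-e)*y*e = y*e - e*y*e" by (simp add: algebra_simps)
      then show ?thesis using h2 by simp
    qed
    finally show "p*y = y*p" unfolding p_def by (simp add: algebra_simps)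
  qed
  have qe: "q*e = 0" unfolding e_def using qs by (simp flip: mult.assoc)
  have eq: "e*q = 0" unfolding e_def using sq bs by (metis mult.assoc mult_zero_right)
  have ap: "a*p = q" unfolding as p_def using se qe by (simp add: algebra_simps)
  define c where "c = b*b*s"
  have cq: "c*q = 0" unfolding c_def using sq by (simp add: mult.assoc)
  have qc: "q*c = 0" unfolding c_def using qs bs by (metis mult.assoc mult_zero_left)
  have ec: "e*c = c" unfolding e_def c_def using bs sbs by (metis mult.assoc)
  have ce: "c*e = c" unfolding e_def c_def using bs sbs by (metis mult.assoc)
  have sc1: "s*c = e" unfolding e_def c_def using bs sbs by (metis mult.assoc)
  have cs1: "c*s = e" unfolding e_def c_def using bs sbs by (metis mult.assoc)
  define w where "w = s + (1 - e)"
  define v where "v = c + (1 - e)"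
  have wv: "w*v = 1" unfolding w_def v_def using sc1 s1e ec ee
    by (simp add: algebra_simps)
  have vw: "v*w = 1" unfolding w_def v_def using cs1 s1e' ce ee
    by (simp add: algebra_simps)
  have vq: "v*q = q" unfolding v_def using cq eq by (simp add: algebra_simps)
  have qv: "q*v = q" unfolding v_def using qc qe by (simp add: algebra_simps)
  have "unit_el (1 + q*v)"
  proof -
    have "1 \<in> comm q" by (simp add: comm_def)
    with qq have "unit_el (1 + q*1)" unfolding qnil_def by blast
    then show ?thesis using qv by simp
  qed
  moreover have "unit_el w" unfolding unit_el_def using wv vw by blast
  ultimately have "unit_el ((1 + q*v)*w)" by (rule unit_mult)
  moreover have "(1 + q*v)*w = a + p"
  proof -
    have "(1 + q*v)*w = w + q*(v*w)" by (simp add: algebra_simps)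
    then show ?thesis using vw unfolding as p_def w_def by simp
  qed
  ultimately have "unit_el (a+p)" by simp
  then show ?thesis unfolding quasipolar_def using pp pc ap qq by auto
qed

theorem corollary2p17:
  fixes a :: "'a::ring_1"
  shows "quasipolar a \<longleftrightarrow>
    (\<exists>s q. a = s + q \<and> strongly_regular s \<and> s \<in> comm2 a \<and> q \<in> qnil
       \<and> s * q = 0 \<and> q * s = 0)"
proof
  assume "quasipolar a"
  then obtain p where "p*p = p" "p \<in> comm2 a" "unit_el (a+p)" "a*p \<in> qnil"
    unfolding quasipolar_def by blast
  then show "\<exists>s q. a = s + q \<and> strongly_regular s \<and> s \<in> comm2 a \<and> q \<in> qnil
       \<and> s * q = 0 \<and> q * s = 0"
    using fwd unfolding unit_el_def by blast
next
  assume "\<exists>s q. a = s + q \<and> strongly_regular s \<and> s \<in> comm2 a \<and> q \<in> qnil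
       \<and> s * q = 0 \<and> q * s = 0"
  then show "quasipolar a" unfolding strongly_regular_def using bwd by blast
qed

end
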